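(* Let $X$ be a separable real Banach space and let $Y$ be a real Banach space such that no closed subspace of $Y$ is isomorphic to $\ell_1$. Let $\varepsilon>0$ and let $f:X\to Y$ be an $\varepsilon$-isometry. Then there exists an isometry from $X$ into the bidual $Y^{**}$, i.e. a map $U:X\to Y^{**}$ with $\|U(x)-U(y)\|=\|x-y\|$ for all $x,y\in X$.
   Context: For $\varepsilon>0$, a map $f:X\to Y$ between Banach spaces is an $\varepsilon$-isometry if $\big|\|f(x)-f(y)\|-\|x-y\|\big|\le\varepsilon$ for all $x,y\in X$. An isometry is a map $g$ with $\|g(x)-g(y)\|=\|x-y\|$ for all $x,y$ (not required to be linear). *)

theory Defs
  imports "HOL-Analysis.Analysis"
begin

definition ell1 :: "(nat \<Rightarrow> real) set" where
  "ell1 = {a. summable (\<lambda>n. \<bar>a n\<bar>)}"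

definition ell1_norm :: "(nat \<Rightarrow> real) \<Rightarrow> real" where
  "ell1_norm a = (\<Sum>n. \<bar>a n\<bar>)"

definition isomorphic_to_ell1 :: "'b::real_normed_vector set \<Rightarrow> bool" where
  "isomorphic_to_ell1 S \<longleftrightarrow>
     (\<exists>T :: (nat \<Rightarrow> real) \<Rightarrow> 'b.
        bij_betw T ell1 S \<and>
        (\<forall>a\<in>ell1. \<forall>b\<in>ell1. T (\<lambda>n. a n + b n) = T a + T b) \<and>
        (\<forall>a\<in>ell1. \<forall>c::real. T (\<lambda>n. c * a n) = c *\<^sub>R T a) \<and>
        (\<exists>c C. 0 < c \<and> 0 < C \<and>
           (\<forall>a\<in>ell1. c * ell1_norm a \<le> norm (T a) \<and> norm (T a) \<le> C * ell1_norm a)))"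

definition eps_isometry :: "real \<Rightarrow> ('a::real_normed_vector \<Rightarrow> 'b::real_normed_vector) \<Rightarrow> bool" where
  "eps_isometry \<epsilon> f \<longleftrightarrow> (\<forall>x y. \<bar>norm (f x - f y) - norm (x - y)\<bar> \<le> \<epsilon>)"

end

theory Submission
  imports Defs
begin

definition graphok :: "('v::real_vector \<Rightarrow> real) \<Rightarrow> ('v \<times> real) set \<Rightarrow> bool" where
 "graphok p G \<longleftrightarrow> (\<forall>x a b. (x,a)\<in>G \<longrightarrow> (x,b)\<in>G \<longrightarrow> a=b) \<and>
   (\<forall>x a y b. (x,a)\<in>G \<longrightarrow> (y,b)\<in>G \<longrightarrow> (x+y,a+b)\<in>G) \<and>
   (\<forall>x a c. (x,a)\<in>G \<longrightarrow> (c *\<^sub>R x, c*a)\<in>G) \<and> (\<forall>x a. (x,a)\<in>G \<longrightarrow> a \<le> p x)"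

lemma graphokD:
  assumes "graphok p G"
  shows "\<And>x a b. (x,a)\<in>G \<Longrightarrow> (x,b)\<in>G \<Longrightarrow> a=b"
    and "\<And>x a y b. (x,a)\<in>G \<Longrightarrow> (y,b)\<in>G \<Longrightarrow> (x+y,a+b)\<in>G"
    and "\<And>x a c. (x,a)\<in>G \<Longrightarrow> (c *\<^sub>R x, c*a)\<in>G"
    and "\<And>x a. (x,a)\<in>G \<Longrightarrow> a \<le> p x"
  using assms unfolding graphok_def by blast+

lemma graphok_union:
  assumes "C \<in> chains {G. graphok p G}"
  shows "graphok p (\<Union>C)"
proof -
  have sub: "\<And>G. G\<in>C \<Longrightarrow> graphok p G" and ch: "\<And>A B. A\<in>C \<Longrightarrow> B\<in>C \<Longrightarrow> A \<subseteq> B \<or> B \<subseteq> A"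
    using assms by (auto simp: chains_def chain_subset_def)
  show ?thesis unfolding graphok_def
  proof (intro conjI allI impI)
    fix x a b assume "(x,a) \<in> \<Union>C" "(x,b) \<in> \<Union>C"
    then obtain A B where AB: "A\<in>C" "B\<in>C" "(x,a)\<in>A" "(x,b)\<in>B" by auto
    show "a = b"
    proof (cases "A \<subseteq> B")
      case True
      then show ?thesis using AB graphokD(1)[OF sub[OF AB(2)]] by blast
    next
      case False
      then have "B \<subseteq> A" using ch AB by blast
      then show ?thesis using AB graphokD(1)[OF sub[OF AB(1)]] by blast
    qed
  next
    fix x a y b assume "(x,a) \<in> \<Union>C" "(y,b) \<in> \<Union>C"
    then obtain A B where AB: "A\<in>C" "B\<in>C" "(x,a)\<in>A" "(y,b)\<in>B" by auto
    show "(x+y,a+b) \<in> \<Union>C"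
    proof (cases "A \<subseteq> B")
      case True
      then show ?thesis using AB graphokD(2)[OF sub[OF AB(2)]] by blast
    next
      case False
      then have "B \<subseteq> A" using ch AB by blast
      then show ?thesis using AB graphokD(2)[OF sub[OF AB(1)]] by blast
    qed
  next
    fix x a c assume "(x,a) \<in> \<Union>C"
    then obtain A where "A\<in>C" "(x,a)\<in>A" by auto
    then show "(c *\<^sub>R x, c*a) \<in> \<Union>C" using graphokD(3)[OF sub] by blast
  next
    fix x a assume "(x,a) \<in> \<Union>C"
    then obtain A where "A\<in>C" "(x,a)\<in>A" by auto
    then show "a \<le> p x" using graphokD(4)[OF sub] by blast
  qed
qed

lemma graphok_extend:
  assumes G: "graphok p G" and Gne: "G \<noteq> {}"
    and sub: "\<And>x y. p (x+y) \<le> p x + p y"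
    and hom: "\<And>c x. c > 0 \<Longrightarrow> p (c *\<^sub>R x) = c * p x"
    and x0: "x0 \<notin> fst ` G"
  shows "\<exists>G'. graphok p G' \<and> G \<subset> G'"
proof -
  from G have funG: "\<And>x a b. (x,a)\<in>G \<Longrightarrow> (x,b)\<in>G \<Longrightarrow> a=b"
    and add: "\<And>x a y b. (x,a)\<in>G \<Longrightarrow> (y,b)\<in>G \<Longrightarrow> (x+y,a+b)\<in>G"
    and smul: "\<And>x a c. (x,a)\<in>G \<Longrightarrow> (c *\<^sub>R x, c*a)\<in>G"
    and dom: "\<And>x a. (x,a)\<in>G \<Longrightarrow> a \<le> p x"
    using graphokD[OF G] by blast+
  obtain z0 a0 where "(z0,a0) \<in> G" using Gne by auto
  then have G0: "(0,0) \<in> G" using smul[of z0 a0 0] by simp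
  have key: "d - p (x - x0) \<le> p (y + x0) - e" if "(x,d)\<in>G" "(y,e)\<in>G" for x d y e
  proof -
    have "d + e \<le> p (x + y)" using dom add that by blast
    also have "\<dots> \<le> p (x - x0) + p (y + x0)" using sub[of "x - x0" "y + x0"] by simp
    finally show ?thesis by simp
  qed
  define c where "c = Sup {d - p (x - x0) | x d. (x,d) \<in> G}"
  have ne: "{d - p (x - x0) | x d. (x,d) \<in> G} \<noteq> {}" using G0 by blast
  have bdd: "bdd_above {d - p (x - x0) | x d. (x,d) \<in> G}"
    unfolding bdd_above_def using key[OF _ G0] by auto
  have c1: "d - p (x - x0) \<le> c" if "(x,d)\<in>G" for x d
    unfolding c_def using that bdd by (auto intro!: cSup_upper)
  have c2: "c \<le> p (y + x0) - e" if "(y,e)\<in>G" for y e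
    unfolding c_def using ne key[OF _ that] by (auto intro!: cSup_least)
  define G' where "G' = {(x + t *\<^sub>R x0, a + t * c) | x a t. (x,a) \<in> G}"
  have uniq: "x = y \<and> t = s" if "x + t *\<^sub>R x0 = y + s *\<^sub>R x0" "(x,a)\<in>G" "(y,b)\<in>G" for x y a b t s
  proof (cases "t = s")
    case True then show ?thesis using that by simp
  next
    case False
    have e: "(t - s) *\<^sub>R x0 = y - x" using that(1) by (simp add: algebra_simps)
    have "x0 = (1/(t-s)) *\<^sub>R ((t - s) *\<^sub>R x0)" using False by simp
    then have "x0 = (1/(t-s)) *\<^sub>R (y - x)" using e by simp
    moreover have "(y - x, b - a) \<in> G" using add[OF that(3) smul[OF that(2), of "-1"]] by simp
    ultimately have "(x0, (1/(t-s)) * (b - a)) \<in> G" using smul by metis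
    then show ?thesis using x0 by force
  qed
  have "graphok p G'"
    unfolding graphok_def
  proof (intro conjI allI impI)
    fix x a b assume "(x,a)\<in>G'" "(x,b)\<in>G'"
    then obtain x1 a1 t1 x2 a2 t2 where "(x1,a1)\<in>G" "(x2,a2)\<in>G" "x = x1 + t1 *\<^sub>R x0" "a = a1 + t1*c"
      "x = x2 + t2 *\<^sub>R x0" "b = a2 + t2*c" unfolding G'_def by blast
    then show "a = b" using uniq[of x1 t1 x2 t2 a1 a2] funG by auto
  next
    fix x a y b assume "(x,a)\<in>G'" "(y,b)\<in>G'"
    then obtain x1 a1 t1 x2 a2 t2 where "(x1,a1)\<in>G" "(x2,a2)\<in>G" "x = x1 + t1 *\<^sub>R x0" "a = a1 + t1*c"
      "y = x2 + t2 *\<^sub>R x0" "b = a2 + t2*c" unfolding G'_def by blast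
    moreover have "x + y = (x1 + x2) + (t1 + t2) *\<^sub>R x0" "a + b = (a1 + a2) + (t1+t2)*c"
      using calculation by (auto simp: algebra_simps)
    ultimately show "(x+y, a+b) \<in> G'" unfolding G'_def using add by blast
  next
    fix x a r assume "(x,a)\<in>G'"
    then obtain x1 a1 t1 where "(x1,a1)\<in>G" "x = x1 + t1 *\<^sub>R x0" "a = a1 + t1*c"
      unfolding G'_def by blast
    moreover have "r *\<^sub>R x = r *\<^sub>R x1 + (r*t1) *\<^sub>R x0" "r * a = r*a1 + (r*t1)*c"
      using calculation by (auto simp: algebra_simps)
    ultimately show "(r *\<^sub>R x, r*a) \<in> G'" unfolding G'_def using smul by blast
  next
    fix x a assume "(x,a)\<in>G'"
    then obtain x1 a1 t where xa: "(x1,a1)\<in>G" "x = x1 + t *\<^sub>R x0" "a = a1 + t*c"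
      unfolding G'_def by blast
    show "a \<le> p x"
    proof (cases "t > 0")
      case True
      have "((1/t) *\<^sub>R x1, (1/t)*a1) \<in> G" using smul xa by blast
      from c2[OF this] have "c \<le> p ((1/t) *\<^sub>R x1 + x0) - (1/t)*a1" .
      then have "t * c \<le> t * p ((1/t) *\<^sub>R x1 + x0) - a1" using True
        by (simp add: field_simps)
      also have "t * p ((1/t) *\<^sub>R x1 + x0) = p (t *\<^sub>R ((1/t) *\<^sub>R x1 + x0))"
        using hom[OF True] by simp
      also have "t *\<^sub>R ((1/t) *\<^sub>R x1 + x0) = x" using True xa by (simp add: algebra_simps)
      finally show ?thesis using xa by simp
    next
      case False
      show ?thesis
      proof (cases "t = 0")
        case True then show ?thesis using xa dom by simp
      next
        case False
        with \<open>\<not> t > 0\<close> have tn: "-t > 0" by simp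
        have "((1/(-t)) *\<^sub>R x1, (1/(-t))*a1) \<in> G" using smul xa by blast
        from c1[OF this] have "(1/(-t))*a1 - p ((1/(-t)) *\<^sub>R x1 - x0) \<le> c" .
        then have "a1 - (-t) * p ((1/(-t)) *\<^sub>R x1 - x0) \<le> (-t) * c" using tn
          by (simp add: field_simps)
        also have "(-t) * p ((1/(-t)) *\<^sub>R x1 - x0) = p ((-t) *\<^sub>R ((1/(-t)) *\<^sub>R x1 - x0))"
          using hom[OF tn] by simp
        also have "(-t) *\<^sub>R ((1/(-t)) *\<^sub>R x1 - x0) = x" using tn xa by (simp add: algebra_simps)
        finally show ?thesis using xa by (simp add: algebra_simps)
      qed
    qed
  qed
  moreover have "G \<subseteq> G'"
  proof
    fix z assume "z \<in> G"
    then obtain x a where "z = (x,a)" "(x,a)\<in>G" by (cases z) auto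
    then have "z = (x + 0 *\<^sub>R x0, a + 0 * c)" by simp
    then show "z \<in> G'" unfolding G'_def using \<open>(x,a)\<in>G\<close> by blast
  qed
  moreover have "(x0, c) \<in> G'"
  proof -
    have "(x0, c) = (0 + 1 *\<^sub>R x0, 0 + 1 * c)" by simp
    then show ?thesis unfolding G'_def using G0 by blast
  qed
  moreover have "(x0, c) \<notin> G" using x0 by force
  ultimately show ?thesis by blast
qed

theorem hahn_banach_sublinear:
  fixes p :: "'v::real_vector \<Rightarrow> real"
  assumes sub: "\<And>x y. p (x+y) \<le> p x + p y"
    and hom: "\<And>c x. c > 0 \<Longrightarrow> p (c *\<^sub>R x) = c * p x"
  shows "\<exists>L. linear L \<and> (\<forall>x. L x \<le> p x)"
proof -
  have "\<exists>M\<in>{G. graphok p G}. \<forall>X\<in>{G. graphok p G}. M \<subseteq> X \<longrightarrow> X = M"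
    by (rule Zorn_Lemma) (use graphok_union in blast)
  then obtain M where M: "graphok p M" and max: "\<And>X. graphok p X \<Longrightarrow> M \<subseteq> X \<Longrightarrow> X = M"
    by auto
  have p0: "p 0 = 0" using hom[of 2 0] by simp
  have Mne: "M \<noteq> {}"
  proof
    assume "M = {}"
    have "graphok p {(0,0)}" unfolding graphok_def using p0 by auto
    then show False using max[of "{(0,0)}"] \<open>M = {}\<close> by auto
  qed
  have dom: "\<forall>x. \<exists>a. (x,a) \<in> M"
  proof (rule ccontr)
    assume "\<not> ?thesis"
    then obtain x0 where "x0 \<notin> fst ` M" by force
    from graphok_extend[OF M Mne sub hom this] obtain G' where "graphok p G'" "M \<subset> G'" by blast
    then show False using max by blast
  qed
  define L where "L x = (THE a. (x,a) \<in> M)" for x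
  have LM: "(x, L x) \<in> M" for x
  proof -
    obtain a where a: "(x,a)\<in>M" using dom by blast
    have "L x = a" unfolding L_def using a graphokD(1)[OF M] by (intro the_equality) blast+
    then show ?thesis using a by simp
  qed
  have Leq: "L x = a" if "(x,a) \<in> M" for x a using LM[of x] that graphokD(1)[OF M] by blast
  have Madd: "\<And>x a y b. (x,a)\<in>M \<Longrightarrow> (y,b)\<in>M \<Longrightarrow> (x+y,a+b)\<in>M"
    and Msmul: "\<And>x a c. (x,a)\<in>M \<Longrightarrow> (c *\<^sub>R x, c*a)\<in>M"
    and Mdom: "\<And>x a. (x,a)\<in>M \<Longrightarrow> a \<le> p x"
    using graphokD[OF M] by blast+
  have "linear L"
  proof (rule linearI)
    fix x y show "L (x + y) = L x + L y"
      using Leq[OF Madd[OF LM[of x] LM[of y]]] .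
  next
    fix c x show "L (c *\<^sub>R x) = c *\<^sub>R L x"
      using Leq[OF Msmul[OF LM[of x]]] by simp
  qed
  moreover have "\<forall>x. L x \<le> p x" using Mdom LM by blast
  ultimately show ?thesis by blast
qed


definition sig :: "(nat \<Rightarrow> real) \<Rightarrow> nat \<Rightarrow> real" where
  "sig b N = (SUP n\<in>{N..}. b n)"
definition lsup :: "(nat \<Rightarrow> real) \<Rightarrow> real" where
  "lsup b = (INF N. sig b N)"

definition bnd :: "(nat \<Rightarrow> real) \<Rightarrow> bool" where
  "bnd s \<longleftrightarrow> (\<exists>B. \<forall>n. \<bar>s n\<bar> \<le> B)"

lemma sig_upper: "bnd b \<Longrightarrow> n \<ge> N \<Longrightarrow> b n \<le> sig b N"
  unfolding sig_def bnd_def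
  by (rule cSUP_upper) (auto simp: bdd_above_def abs_le_iff intro: order_trans)

lemma sig_least: "(\<And>n. n \<ge> N \<Longrightarrow> b n \<le> a) \<Longrightarrow> sig b N \<le> a"
  unfolding sig_def by (rule cSUP_least) auto

lemma sig_lower: "bnd b \<Longrightarrow> \<exists>B. \<forall>N. - B \<le> sig b N"
proof -
  assume "bnd b"
  then obtain B where B: "\<And>n. \<bar>b n\<bar> \<le> B" unfolding bnd_def by blast
  have "- B \<le> sig b N" for N
    using sig_upper[OF \<open>bnd b\<close>, of N N] B[of N] by linarith
  then show ?thesis by blast
qed

lemma sig_antimono: "bnd b \<Longrightarrow> N \<le> M \<Longrightarrow> sig b M \<le> sig b N"
  by (rule sig_least) (auto intro: sig_upper)

lemma lsup_le_sig: "bnd b \<Longrightarrow> lsup b \<le> sig b N"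
  unfolding lsup_def using sig_lower[of b]
  by (intro cINF_lower) (auto simp: bdd_below_def)

lemma lsup_greatest: "(\<And>N. a \<le> sig b N) \<Longrightarrow> a \<le> lsup b"
  unfolding lsup_def by (rule cINF_greatest) auto

lemma bnd_add: "bnd s \<Longrightarrow> bnd t \<Longrightarrow> bnd (\<lambda>n. s n + t n)"
  unfolding bnd_def
proof (elim exE)
  fix B C assume "\<forall>n. \<bar>s n\<bar> \<le> B" "\<forall>n. \<bar>t n\<bar> \<le> C"
  then have "\<forall>n. \<bar>s n + t n\<bar> \<le> B + C" by (metis abs_triangle_ineq add_mono order_trans)
  then show "\<exists>B. \<forall>n. \<bar>s n + t n\<bar> \<le> B" by blast
qed

lemma bnd_scale: "bnd s \<Longrightarrow> bnd (\<lambda>n. c * s n)"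
  unfolding bnd_def
proof (elim exE)
  fix B assume "\<forall>n. \<bar>s n\<bar> \<le> B"
  then have "\<forall>n. \<bar>c * s n\<bar> \<le> \<bar>c\<bar> * B" by (simp add: abs_mult mult_left_mono)
  then show "\<exists>B. \<forall>n. \<bar>c * s n\<bar> \<le> B" by blast
qed

lemma lsup_add: assumes "bnd s" "bnd t" shows "lsup (\<lambda>n. s n + t n) \<le> lsup s + lsup t"
proof -
  have st: "bnd (\<lambda>n. s n + t n)" using assms bnd_add by blast
  have "lsup (\<lambda>n. s n + t n) \<le> sig s N + sig t M" for N M
  proof -
    have "lsup (\<lambda>n. s n + t n) \<le> sig (\<lambda>n. s n + t n) (max N M)" by (rule lsup_le_sig[OF st])
    also have "\<dots> \<le> sig s (max N M) + sig t (max N M)"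
      by (rule sig_least) (auto intro!: add_mono sig_upper assms)
    also have "\<dots> \<le> sig s N + sig t M"
      by (intro add_mono sig_antimono assms) auto
    finally show ?thesis .
  qed
  then have "lsup (\<lambda>n. s n + t n) - sig t M \<le> lsup s" for M
    by (intro lsup_greatest) (simp add: algebra_simps)
  then have "lsup (\<lambda>n. s n + t n) - lsup s \<le> lsup t"
    by (intro lsup_greatest) (simp add: algebra_simps)
  then show ?thesis by simp
qed

lemma lsup_scale_le: assumes "bnd s" "c > 0" shows "lsup (\<lambda>n. c * s n) \<le> c * lsup s"
proof -
  have cs: "bnd (\<lambda>n. c * s n)" using assms bnd_scale by blast
  have "lsup (\<lambda>n. c * s n) \<le> c * sig s N" for N
  proof -
    have "lsup (\<lambda>n. c * s n) \<le> sig (\<lambda>n. c * s n) N" by (rule lsup_le_sig[OF cs])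
    also have "\<dots> \<le> c * sig s N"
      by (rule sig_least) (use assms sig_upper in auto)
    finally show ?thesis .
  qed
  then have "lsup (\<lambda>n. c * s n) / c \<le> lsup s"
    by (intro lsup_greatest) (use assms in \<open>simp add: field_simps\<close>)
  then show ?thesis using assms by (simp add: field_simps)
qed

lemma lsup_scale: assumes "bnd s" "c > 0" shows "lsup (\<lambda>n. c * s n) = c * lsup s"
proof -
  have "lsup (\<lambda>n. (1/c) * (c * s n)) \<le> (1/c) * lsup (\<lambda>n. c * s n)"
    by (rule lsup_scale_le) (use assms bnd_scale in auto)
  then have "c * lsup s \<le> lsup (\<lambda>n. c * s n)" using assms by (simp add: field_simps)
  then show ?thesis using lsup_scale_le[OF assms] by simp
qed

lemma lsup_ev: "bnd s \<Longrightarrow> (\<And>n. n \<ge> N \<Longrightarrow> s n \<le> a) \<Longrightarrow> lsup s \<le> a"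
  using lsup_le_sig[of s N] sig_least[of N s a] by simp

lemma bnd_bcontfun: "bnd (apply_bcontfun b)"
proof -
  obtain B where "\<forall>n. norm (apply_bcontfun b n) \<le> B"
    using bounded_apply_bcontfun[of b] unfolding bounded_iff by blast
  then show ?thesis unfolding bnd_def by auto
qed

lemma bnd_in_bcontfun: "bnd s \<Longrightarrow> s \<in> bcontfun"
  unfolding bnd_def by (auto intro!: bcontfun_normI)

lemma banach_limit:
  "\<exists>BLim :: (nat \<Rightarrow> real) \<Rightarrow> real.
     (\<forall>s t. bnd s \<longrightarrow> bnd t \<longrightarrow> BLim (\<lambda>n. s n + t n) = BLim s + BLim t) \<and>
     (\<forall>s c. bnd s \<longrightarrow> BLim (\<lambda>n. c * s n) = c * BLim s) \<and>
     (\<forall>s N a. bnd s \<longrightarrow> (\<forall>n\<ge>N. s n \<le> a) \<longrightarrow> BLim s \<le> a)"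
proof -
  define p where "p b = lsup (apply_bcontfun b)" for b :: "nat \<Rightarrow>\<^sub>C real"
  have "\<exists>L. linear L \<and> (\<forall>x. L x \<le> p x)"
  proof (rule hahn_banach_sublinear)
    fix x y :: "nat \<Rightarrow>\<^sub>C real"
    show "p (x + y) \<le> p x + p y" unfolding p_def
      using lsup_add[OF bnd_bcontfun bnd_bcontfun, of x y] by simp
  next
    fix c :: real and x :: "nat \<Rightarrow>\<^sub>C real" assume "c > 0"
    then show "p (c *\<^sub>R x) = c * p x" unfolding p_def
      using lsup_scale[OF bnd_bcontfun, of c x] by simp
  qed
  then obtain L where L: "linear L" "\<And>x. L x \<le> p x" by blast
  define BLim where "BLim s = L (Bcontfun s)" for s
  have inv: "apply_bcontfun (Bcontfun s) = s" if "bnd s" for s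
    using Bcontfun_inverse[OF bnd_in_bcontfun[OF that]] .
  have "BLim (\<lambda>n. s n + t n) = BLim s + BLim t" if "bnd s" "bnd t" for s t
  proof -
    have "Bcontfun (\<lambda>n. s n + t n) = Bcontfun s + Bcontfun t"
      by (rule bcontfun_eqI) (simp add: inv that bnd_add)
    then show ?thesis unfolding BLim_def using linear_add[OF L(1)] by simp
  qed
  moreover have "BLim (\<lambda>n. c * s n) = c * BLim s" if "bnd s" for s c
  proof -
    have "Bcontfun (\<lambda>n. c * s n) = c *\<^sub>R Bcontfun s"
      by (rule bcontfun_eqI) (simp add: inv that bnd_scale)
    then show ?thesis unfolding BLim_def using linear_scale[OF L(1)] by simp
  qed
  moreover have "BLim s \<le> a" if "bnd s" "\<forall>n\<ge>N. s n \<le> a" for s N a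
  proof -
    have "BLim s \<le> p (Bcontfun s)" unfolding BLim_def by (rule L(2))
    also have "\<dots> \<le> a" unfolding p_def inv[OF that(1)] using lsup_ev[OF that(1)] that(2) by blast
    finally show ?thesis .
  qed
  ultimately show ?thesis by blast
qed


lemma sandwich:
  fixes k m :: "'b::real_normed_vector \<Rightarrow> real"
  assumes kc: "\<And>q r a. 0 \<le> a \<Longrightarrow> a \<le> 1 \<Longrightarrow> k (a *\<^sub>R q + (1-a) *\<^sub>R r) \<le> a * k q + (1-a) * k r"
    and mc: "\<And>q r a. 0 \<le> a \<Longrightarrow> a \<le> 1 \<Longrightarrow> m (a *\<^sub>R q + (1-a) *\<^sub>R r) \<le> a * m q + (1-a) * m r"
    and kl: "\<And>q r. k q \<le> k r + norm (q - r)"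
    and pos: "\<And>q. 0 \<le> k q + m q"
  shows "\<exists>\<phi> c. linear \<phi> \<and> (\<forall>y. \<phi> y \<le> norm y) \<and> (\<forall>q. \<phi> q + c \<le> k q \<and> - m q \<le> \<phi> q + c)"
proof -
  define T where "T y = {(k (l *\<^sub>R y + z) + m z) / l | l z. l > 0}" for y
  define p where "p y = Inf (T y)" for y
  have Tlow: "- norm y \<le> e" if "e \<in> T y" for e y
  proof -
    from that obtain l z where e: "e = (k (l *\<^sub>R y + z) + m z) / l" "l > 0" unfolding T_def by blast
    have "k z \<le> k (l *\<^sub>R y + z) + norm (z - (l *\<^sub>R y + z))" by (rule kl)
    also have "norm (z - (l *\<^sub>R y + z)) = l * norm y" using e(2) by simp
    finally have "- l * norm y \<le> k (l *\<^sub>R y + z) + m z" using pos[of z] by simp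
    then have "(- norm y) * l \<le> e * l" using e by (simp add: field_simps)
    then show ?thesis using e(2) by (rule mult_right_le_imp_le)
  qed
  have Tne: "T y \<noteq> {}" for y
  proof -
    have "(k (1 *\<^sub>R y + 0) + m 0) / 1 \<in> T y" unfolding T_def by (rule CollectI, rule exI[of _ 1], rule exI[of _ 0]) simp
    then show ?thesis by blast
  qed
  have Tbdd: "bdd_below (T y)" for y unfolding bdd_below_def using Tlow by blast
  have p_le: "p y \<le> (k (l *\<^sub>R y + z) + m z) / l" if "l > 0" for y l z
    unfolding p_def by (rule cInf_lower[OF _ Tbdd]) (use that in \<open>auto simp: T_def\<close>)
  have p_ge: "a \<le> p y" if "\<And>l z. l > 0 \<Longrightarrow> a \<le> (k (l *\<^sub>R y + z) + m z) / l" for a y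
    unfolding p_def by (rule cInf_greatest[OF Tne]) (use that in \<open>auto simp: T_def\<close>)
  have psub: "p (x + y) \<le> p x + p y" for x y
  proof -
    have main: "p (x + y) \<le> (k (l1 *\<^sub>R x + z1) + m z1) / l1 + (k (l2 *\<^sub>R y + z2) + m z2) / l2"
      if l: "l1 > 0" "l2 > 0" for l1 l2 z1 z2
    proof -
      define l where "l = l1 * l2 / (l1 + l2)"
      define w where "w = l2 / (l1 + l2)"
      define z where "z = w *\<^sub>R z1 + (1 - w) *\<^sub>R z2"
      have lpos: "l > 0" unfolding l_def using l by simp
      have w01: "0 \<le> w" "w \<le> 1" unfolding w_def using l by auto
      have w1: "1 - w = l1 / (l1 + l2)" unfolding w_def using l by (simp add: field_simps)
      have wl1: "w * l1 = l" and wl2: "(1 - w) * l2 = l" unfolding w1 unfolding w_def l_def using l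
        by (simp_all add: field_simps)
      have pt: "l *\<^sub>R (x + y) + z = w *\<^sub>R (l1 *\<^sub>R x + z1) + (1 - w) *\<^sub>R (l2 *\<^sub>R y + z2)"
        unfolding z_def scaleR_add_right scaleR_scaleR wl1 wl2 by (simp add: algebra_simps)
      have "p (x + y) \<le> (k (l *\<^sub>R (x + y) + z) + m z) / l" by (rule p_le[OF lpos])
      also have "\<dots> \<le> (w * k (l1 *\<^sub>R x + z1) + (1 - w) * k (l2 *\<^sub>R y + z2) + (w * m z1 + (1-w) * m z2)) / l"
        unfolding pt using kc[OF w01] mc[OF w01] lpos unfolding z_def
        by (intro divide_right_mono add_mono) auto
      also have "\<dots> = (w / l) * (k (l1 *\<^sub>R x + z1) + m z1) + ((1 - w) / l) * (k (l2 *\<^sub>R y + z2) + m z2)"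
        using lpos by (simp add: field_simps)
      also have "w / l = 1 / l1"
      proof -
        have "0 < l1 * (l1 * l2) + l1 * (l2 * l2)" using l by (intro add_pos_pos mult_pos_pos)
        then show ?thesis unfolding w_def l_def using l by (simp add: field_simps)
      qed
      also have "(1 - w) / l = 1 / l2"
      proof -
        have "0 < l1 * (l1 * l2) + l1 * (l2 * l2)" using l by (intro add_pos_pos mult_pos_pos)
        then show ?thesis unfolding w1 l_def using l by (simp add: field_simps)
      qed
      also have "1 / l1 * (k (l1 *\<^sub>R x + z1) + m z1) + 1 / l2 * (k (l2 *\<^sub>R y + z2) + m z2)
          = (k (l1 *\<^sub>R x + z1) + m z1) / l1 + (k (l2 *\<^sub>R y + z2) + m z2) / l2" by simp
      finally show ?thesis .
    qed
    have "p (x + y) - (k (l2 *\<^sub>R y + z2) + m z2) / l2 \<le> p x" if "l2 > 0" for l2 z2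
    proof (rule p_ge)
      fix l z assume "(l::real) > 0"
      from main[OF this that, of z z2] show "p (x + y) - (k (l2 *\<^sub>R y + z2) + m z2) / l2 \<le> (k (l *\<^sub>R x + z) + m z) / l"
        by simp
    qed
    then have "p (x + y) - p x \<le> p y"
      by (intro p_ge) (simp add: algebra_simps)
    then show ?thesis by simp
  qed
  have phom: "p (c *\<^sub>R x) = c * p x" if c: "c > 0" for c x
  proof -
    have "c * p x \<le> p (c *\<^sub>R x)"
    proof (rule p_ge)
      fix l z assume l: "(l::real) > 0"
      have "p x \<le> (k ((l * c) *\<^sub>R x + z) + m z) / (l * c)"
        by (rule p_le) (use l c in simp)
      then have "c * p x \<le> c * ((k ((l * c) *\<^sub>R x + z) + m z) / (l * c))"
        using c by (intro mult_left_mono) auto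
      also have "\<dots> = (k (l *\<^sub>R (c *\<^sub>R x) + z) + m z) / l" using c l by simp
      finally show "c * p x \<le> (k (l *\<^sub>R (c *\<^sub>R x) + z) + m z) / l" .
    qed
    moreover have "p (c *\<^sub>R x) \<le> c * p x"
    proof -
      have "p (c *\<^sub>R x) / c \<le> p x"
      proof (rule p_ge)
        fix l z assume l: "(l::real) > 0"
        have "p (c *\<^sub>R x) \<le> (k ((l / c) *\<^sub>R (c *\<^sub>R x) + z) + m z) / (l / c)"
          by (rule p_le) (use l c in simp)
        also have "(l / c) *\<^sub>R (c *\<^sub>R x) = l *\<^sub>R x" using c by simp
        finally show "p (c *\<^sub>R x) / c \<le> (k (l *\<^sub>R x + z) + m z) / l"
          using c l by (simp add: field_simps)
      qed
      then show ?thesis using c by (simp add: field_simps)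
    qed
    ultimately show ?thesis by simp
  qed
  obtain \<phi> where \<phi>: "linear \<phi>" "\<And>x. \<phi> x \<le> p x"
    using hahn_banach_sublinear[of p, OF psub phom] by blast
  have pnorm: "p y \<le> norm y" for y
  proof (rule ccontr)
    assume "\<not> p y \<le> norm y"
    then have d: "p y - norm y > 0" by simp
    define l where "l = (k 0 + m 0 + 1) / (p y - norm y)"
    have k0: "0 \<le> k 0 + m 0" by (rule pos)
    have lpos: "l > 0" unfolding l_def using d k0 by simp
    have "k (l *\<^sub>R y + 0) \<le> k 0 + norm (l *\<^sub>R y + 0 - 0)" by (rule kl)
    also have "norm (l *\<^sub>R y + 0 - 0) = l * norm y" using lpos by simp
    finally have "p y \<le> (k 0 + l * norm y + m 0) / l"
      using p_le[OF lpos, of y 0] lpos by (simp add: divide_right_mono order_trans)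
    also have "\<dots> = norm y + (k 0 + m 0) / l" using lpos by (simp add: field_simps)
    also have "(k 0 + m 0) / l < p y - norm y" unfolding l_def using d k0
      by (simp add: field_simps)
    finally show False by simp
  qed
  have key: "- m q' - \<phi> q' \<le> k q - \<phi> q" for q q'
  proof -
    have "\<phi> q - \<phi> q' = \<phi> (q - q')" using linear_diff[OF \<phi>(1)] by simp
    also have "\<dots> \<le> p (q - q')" by (rule \<phi>(2))
    also have "\<dots> \<le> (k (1 *\<^sub>R (q - q') + q') + m q') / 1" by (rule p_le) simp
    finally show ?thesis by simp
  qed
  define c where "c = Sup (range (\<lambda>q'. - m q' - \<phi> q'))"
  have c1: "- m q' - \<phi> q' \<le> c" for q'
    unfolding c_def by (rule cSUP_upper) (use key[of _ 0] in \<open>auto simp: bdd_above_def\<close>)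
  have c2: "c \<le> k q - \<phi> q" for q
    unfolding c_def by (rule cSUP_least) (use key in auto)
  show ?thesis
    apply (rule exI[of _ \<phi>], rule exI[of _ c])
  proof (intro conjI allI)
    fix q
    show "\<phi> q + c \<le> k q" using c2[of q] by simp
    show "- m q \<le> \<phi> q + c" using c1[of q] by simp
  qed (use \<phi> pnorm in \<open>auto intro: order_trans\<close>)
qed


definition Dp :: "'a::real_normed_vector \<Rightarrow> 'a \<Rightarrow> real" where
  "Dp u w = Inf {norm (t *\<^sub>R u + w) - t * norm u | t. t > 0}"

lemma Dp_low: "t > 0 \<Longrightarrow> - norm w \<le> norm (t *\<^sub>R u + w) - t * norm u"
  using norm_triangle_ineq2[of "t *\<^sub>R u" "- w"] by (simp add: abs_le_iff)

lemma Dp_le: "t > 0 \<Longrightarrow> Dp u w \<le> norm (t *\<^sub>R u + w) - t * norm u"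
  unfolding Dp_def
  by (rule cInf_lower) (use Dp_low in \<open>auto simp: bdd_below_def\<close>)

lemma Dp_ge: "(\<And>t. t > 0 \<Longrightarrow> a \<le> norm (t *\<^sub>R u + w) - t * norm u) \<Longrightarrow> a \<le> Dp u w"
  unfolding Dp_def
  by (rule cInf_greatest) (auto intro: exI[of _ 1])

lemma Dp_approx: "\<delta> > 0 \<Longrightarrow> \<exists>t>0. norm (t *\<^sub>R u + w) - t * norm u < Dp u w + \<delta>"
proof (rule ccontr)
  assume "\<delta> > 0" "\<not> (\<exists>t>0. norm (t *\<^sub>R u + w) - t * norm u < Dp u w + \<delta>)"
  then have "Dp u w + \<delta> \<le> Dp u w" by (intro Dp_ge) force
  with \<open>\<delta> > 0\<close> show False by simp
qed

lemma g_mono: "0 \<le> t \<Longrightarrow> t \<le> t' \<Longrightarrow> norm (t' *\<^sub>R u + w) - t' * norm u \<le> norm (t *\<^sub>R u + w) - t * norm u"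
proof -
  assume "0 \<le> t" "t \<le> t'"
  have "norm (t' *\<^sub>R u + w) = norm ((t *\<^sub>R u + w) + (t' - t) *\<^sub>R u)" by (simp add: algebra_simps)
  also have "\<dots> \<le> norm (t *\<^sub>R u + w) + norm ((t' - t) *\<^sub>R u)" by (rule norm_triangle_ineq)
  also have "norm ((t' - t) *\<^sub>R u) = (t' - t) * norm u" using \<open>t \<le> t'\<close> by simp
  finally show ?thesis by (simp add: algebra_simps)
qed

lemma Dp_ev:
  assumes "c > 0" "\<delta> > 0"
  shows "\<exists>N0::nat. \<forall>N\<ge>N0. norm (c *\<^sub>R w + real N *\<^sub>R u) - real N * norm u \<le> c * Dp u w + \<delta>"
proof -
  obtain t0 where t0: "t0 > 0" "norm (t0 *\<^sub>R u + w) - t0 * norm u < Dp u w + \<delta> / c"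
    using Dp_approx[of "\<delta>/c" u w] assms by auto
  define N0 where "N0 = nat \<lceil>c * t0\<rceil>"
  have "norm (c *\<^sub>R w + real N *\<^sub>R u) - real N * norm u \<le> c * Dp u w + \<delta>" if N: "N \<ge> N0" for N
  proof -
    define t where "t = real N / c"
    have "c * t0 \<le> real N" using N unfolding N0_def by linarith
    then have tt: "t0 \<le> t" unfolding t_def using assms by (simp add: field_simps)
    have "c *\<^sub>R w + real N *\<^sub>R u = c *\<^sub>R (t *\<^sub>R u + w)" unfolding t_def using assms
      by (simp add: algebra_simps)
    then have "norm (c *\<^sub>R w + real N *\<^sub>R u) = norm (c *\<^sub>R (t *\<^sub>R u + w))" by (simp only:)
    also have "\<dots> = c * norm (t *\<^sub>R u + w)" using assms by simp
    finally have n1: "norm (c *\<^sub>R w + real N *\<^sub>R u) = c * norm (t *\<^sub>R u + w)" .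
    have n2: "real N * norm u = c * (t * norm u)" unfolding t_def using assms by simp
    have "norm (c *\<^sub>R w + real N *\<^sub>R u) - real N * norm u = c * (norm (t *\<^sub>R u + w) - t * norm u)"
      unfolding n1 n2 by (simp add: algebra_simps)
    also have "\<dots> \<le> c * (norm (t0 *\<^sub>R u + w) - t0 * norm u)"
      using g_mono[of t0 t u w] tt t0 assms by (intro mult_left_mono) auto
    also have "\<dots> \<le> c * (Dp u w + \<delta> / c)" using t0 assms by (intro mult_left_mono) auto
    also have "\<dots> = c * Dp u w + \<delta>" using assms by (simp add: field_simps)
    finally show ?thesis .
  qed
  then show ?thesis by blast
qed

lemma Dp_chord:
  assumes "s < s'"
  shows "Dp (v + s *\<^sub>R y) y + Dp (v + s' *\<^sub>R y) (- y) \<le> 0"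
proof -
  define t where "t = 1 / (s' - s)"
  have t: "t > 0" unfolding t_def using assms by simp
  have ts: "t * s + 1 = t * s'" and ts2: "t * s' - 1 = t * s" unfolding t_def using assms by (simp_all add: field_simps)
  have "t *\<^sub>R (v + s *\<^sub>R y) + y = t *\<^sub>R v + (t * s + 1) *\<^sub>R y" by (simp add: algebra_simps)
  also have "\<dots> = t *\<^sub>R (v + s' *\<^sub>R y)" unfolding ts by (simp add: algebra_simps)
  finally have e1: "t *\<^sub>R (v + s *\<^sub>R y) + y = t *\<^sub>R (v + s' *\<^sub>R y)" .
  have "t *\<^sub>R (v + s' *\<^sub>R y) + - y = t *\<^sub>R v + (t * s' - 1) *\<^sub>R y" by (simp add: algebra_simps)
  also have "\<dots> = t *\<^sub>R (v + s *\<^sub>R y)" unfolding ts2 by (simp add: algebra_simps)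
  finally have e2: "t *\<^sub>R (v + s' *\<^sub>R y) + - y = t *\<^sub>R (v + s *\<^sub>R y)" .
  have "Dp (v + s *\<^sub>R y) y \<le> t * norm (v + s' *\<^sub>R y) - t * norm (v + s *\<^sub>R y)"
    using Dp_le[OF t, of "v + s *\<^sub>R y" y] t unfolding e1 by simp
  moreover have "Dp (v + s' *\<^sub>R y) (- y) \<le> t * norm (v + s *\<^sub>R y) - t * norm (v + s' *\<^sub>R y)"
    using Dp_le[OF t, of "v + s' *\<^sub>R y" "- y"] t unfolding e2 by simp
  ultimately show ?thesis by simp
qed

lemma Dp_density:
  fixes v y :: "'a::real_normed_vector"
  assumes "\<delta> > 0"
  shows "\<exists>s. \<bar>s\<bar> < \<delta> \<and> Dp (v + s *\<^sub>R y) y + Dp (v + s *\<^sub>R y) (- y) \<le> 0"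
proof (rule ccontr)
  assume nex: "\<not> ?thesis"
  have H: "- Dp (v + s *\<^sub>R y) (- y) < Dp (v + s *\<^sub>R y) y" if "s \<in> {-\<delta><..<\<delta>}" for s
  proof -
    have "\<bar>s\<bar> < \<delta>" using that by auto
    then have "\<not> (Dp (v + s *\<^sub>R y) y + Dp (v + s *\<^sub>R y) (- y) \<le> 0)" using nex by blast
    then show ?thesis by linarith
  qed
  define q where "q s = (SOME r. r \<in> \<rat> \<and> - Dp (v + s *\<^sub>R y) (- y) < r \<and> r < Dp (v + s *\<^sub>R y) y)" for s
  have q: "q s \<in> \<rat> \<and> - Dp (v + s *\<^sub>R y) (- y) < q s \<and> q s < Dp (v + s *\<^sub>R y) y"
    if "s \<in> {-\<delta><..<\<delta>}" for s
    unfolding q_def by (rule someI_ex) (use Rats_dense_in_real[OF H[OF that]] in blast)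
  have mono: "q s < q s'" if "s \<in> {-\<delta><..<\<delta>}" "s' \<in> {-\<delta><..<\<delta>}" "s < s'" for s s'
    using q[OF that(1)] q[OF that(2)] Dp_chord[OF that(3), of v y] by linarith
  have "inj_on q {-\<delta><..<\<delta>}"
  proof (rule inj_onI)
    fix s s' assume "s \<in> {-\<delta><..<\<delta>}" "s' \<in> {-\<delta><..<\<delta>}" "q s = q s'"
    then show "s = s'" using mono[of s s'] mono[of s' s] by (cases "s < s'"; cases "s' < s") auto
  qed
  moreover have "q ` {-\<delta><..<\<delta>} \<subseteq> \<rat>" using q by blast
  then have "countable (q ` {-\<delta><..<\<delta>})" using countable_rat countable_subset by blast
  ultimately have "countable {-\<delta><..<\<delta>}" using countable_image_inj_on by blast
  then show False using uncountable_open_interval[of "-\<delta>" \<delta>] assms by simp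
qed


definition is_blim :: "((nat \<Rightarrow> real) \<Rightarrow> real) \<Rightarrow> bool" where
  "is_blim BL \<longleftrightarrow> (\<forall>s t. bnd s \<longrightarrow> bnd t \<longrightarrow> BL (\<lambda>n. s n + t n) = BL s + BL t) \<and>
     (\<forall>s c. bnd s \<longrightarrow> BL (\<lambda>n. c * s n) = c * BL s) \<and>
     (\<forall>s N a. bnd s \<longrightarrow> (\<forall>n\<ge>N. s n \<le> a) \<longrightarrow> BL s \<le> a)"

lemma is_blim_exists: "\<exists>BL. is_blim BL"
  using banach_limit unfolding is_blim_def by blast

lemma bnd_intro: "(\<And>n. \<bar>s n\<bar> \<le> B) \<Longrightarrow> bnd s"
  unfolding bnd_def by blast

lemma bnd_diff: "bnd s \<Longrightarrow> bnd t \<Longrightarrow> bnd (\<lambda>n. s n - t n)"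
  using bnd_add[of s "\<lambda>n. (-1) * t n"] bnd_scale[of t "-1"] by simp

lemma bnd_const: "bnd (\<lambda>n. c)"
  by (rule bnd_intro[of _ "\<bar>c\<bar>"]) simp

context
  fixes BL assumes BL: "is_blim BL"
begin

lemma bl_add: "bnd s \<Longrightarrow> bnd t \<Longrightarrow> BL (\<lambda>n. s n + t n) = BL s + BL t"
  using BL unfolding is_blim_def by blast

lemma bl_scale: "bnd s \<Longrightarrow> BL (\<lambda>n. c * s n) = c * BL s"
  using BL unfolding is_blim_def by blast

lemma bl_le: "bnd s \<Longrightarrow> (\<And>n. n \<ge> N \<Longrightarrow> s n \<le> a) \<Longrightarrow> BL s \<le> a"
  using BL unfolding is_blim_def by blast

lemma bl_ge: assumes "bnd s" "\<And>n. n \<ge> N \<Longrightarrow> a \<le> s n" shows "a \<le> BL s"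
proof -
  have "BL (\<lambda>n. (-1) * s n) \<le> - a" using assms by (intro bl_le bnd_scale) auto
  then show ?thesis using bl_scale[OF assms(1), of "-1"] by simp
qed

lemma bl_diff: "bnd s \<Longrightarrow> bnd t \<Longrightarrow> BL (\<lambda>n. s n - t n) = BL s - BL t"
  using bl_add[of s "\<lambda>n. (-1) * t n"] bl_scale[of t "-1"] bnd_scale[of t "-1"] by simp

lemma bl_mono: assumes "bnd s" "bnd t" "\<And>n. s n \<le> t n" shows "BL s \<le> BL t"
proof -
  have "0 \<le> BL (\<lambda>n. t n - s n)" using assms by (intro bl_ge[of _ 0] bnd_diff) auto
  then show ?thesis using bl_diff[OF assms(2,1)] by simp
qed

lemma bl_le_approx:
  assumes "bnd s" "\<And>\<delta>. \<delta> > 0 \<Longrightarrow> \<exists>N. \<forall>n\<ge>N. s n \<le> a + \<delta>"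
  shows "BL s \<le> a"
proof (rule field_le_epsilon)
  fix e :: real assume "e > 0"
  then obtain N where "\<forall>n\<ge>N. s n \<le> a + e" using assms(2) by blast
  then show "BL s \<le> a + e" using assms(1) by (intro bl_le) auto
qed

lemma bl_ge_approx:
  assumes "bnd s" "\<And>\<delta>. \<delta> > 0 \<Longrightarrow> \<exists>N. \<forall>n\<ge>N. a - \<delta> \<le> s n"
  shows "a \<le> BL s"
proof -
  have "BL (\<lambda>n. (-1) * s n) \<le> - a"
  proof (rule bl_le_approx)
    show "bnd (\<lambda>n. (-1) * s n)" using assms(1) by (rule bnd_scale)
    fix \<delta> :: real assume "\<delta> > 0"
    then obtain N where "\<forall>n\<ge>N. a - \<delta> \<le> s n" using assms(2) by blast
    then have "\<forall>n\<ge>N. (-1) * s n \<le> - a + \<delta>" by force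
    then show "\<exists>N. \<forall>n\<ge>N. (-1) * s n \<le> - a + \<delta>" by blast
  qed
  then show ?thesis using bl_scale[OF assms(1), of "-1"] by simp
qed

lemma bl_const: "BL (\<lambda>n. c) = c"
  using bl_le[OF bnd_const, of 0 c c] bl_ge[OF bnd_const, of 0 c c] by simp

lemma bl_add_const: "bnd s \<Longrightarrow> BL (\<lambda>n. s n + c) = BL s + c"
  using bl_add[OF _ bnd_const, of s c] bl_const by simp

end

lemma inv_small: "(\<delta>::real) > 0 \<Longrightarrow> \<exists>N::nat. \<forall>n\<ge>N. c / real n \<le> \<delta>"
proof -
  assume d: "\<delta> > 0"
  obtain N :: nat where N: "c / \<delta> < real N" using reals_Archimedean2 by blast
  have "c / real n \<le> \<delta>" if "n \<ge> N" for n
  proof (cases "n = 0")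
    case True then show ?thesis using d by simp
  next
    case False
    have "c < \<delta> * real N" using N d by (simp add: field_simps)
    also have "\<dots> \<le> \<delta> * real n" using that d by simp
    finally show ?thesis using False by (simp add: field_simps)
  qed
  then show ?thesis by blast
qed

lemma fdist:
  assumes "eps_isometry \<epsilon> f"
  shows "norm (f a - f b) \<le> norm (a - b) + \<epsilon>" "norm (a - b) - \<epsilon> \<le> norm (f a - f b)"
proof -
  have "\<bar>norm (f a - f b) - norm (a - b)\<bar> \<le> \<epsilon>" using assms unfolding eps_isometry_def by blast
  then show "norm (f a - f b) \<le> norm (a - b) + \<epsilon>" "norm (a - b) - \<epsilon> \<le> norm (f a - f b)"
    by (simp_all add: abs_le_iff)
qed

lemma tri: "norm (a - c) \<le> norm (a - b) + norm (b - (c::'a::real_normed_vector))"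
  by (rule norm_diff_triangle_le) auto

lemma bnd_hs:
  assumes "\<And>N. \<bar>norm (P N - z) - c N\<bar> \<le> B"
  shows "bnd (\<lambda>N. norm (q - P N) - c N)"
proof (rule bnd_intro)
  fix N
  have a: "norm (q - P N) \<le> norm (q - z) + norm (z - P N)" by (rule tri)
  have b: "norm (P N - z) \<le> norm (P N - q) + norm (q - z)" by (rule tri)
  have "norm (z - P N) = norm (P N - z)" "norm (P N - q) = norm (q - P N)" by (simp_all add: norm_minus_commute)
  then show "\<bar>norm (q - P N) - c N\<bar> \<le> norm (q - z) + B" using a b assms[of N] by (simp add: abs_le_iff)
qed

lemma hs_conv:
  fixes P :: "nat \<Rightarrow> 'b::real_normed_vector"
  assumes "0 \<le> a" "a \<le> 1"
  shows "norm ((a *\<^sub>R q + (1 - a) *\<^sub>R r) - P N) - c N \<le> a * (norm (q - P N) - c N) + (1 - a) * (norm (r - P N) - c N)"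
proof -
  have "(a *\<^sub>R q + (1 - a) *\<^sub>R r) - P N = a *\<^sub>R (q - P N) + (1 - a) *\<^sub>R (r - P N)" by (simp add: algebra_simps)
  then have "norm ((a *\<^sub>R q + (1 - a) *\<^sub>R r) - P N) \<le> norm (a *\<^sub>R (q - P N)) + norm ((1 - a) *\<^sub>R (r - P N))"
    using norm_triangle_ineq by metis
  also have "\<dots> = a * norm (q - P N) + (1 - a) * norm (r - P N)" using assms by simp
  finally show ?thesis by (simp add: algebra_simps)
qed


lemma dseq_bound:
  fixes f :: "'a::real_normed_vector \<Rightarrow> 'b::real_normed_vector" and \<phi> :: "'b \<Rightarrow>\<^sub>L real"
  assumes f: "eps_isometry \<epsilon> f" and e: "\<epsilon> > 0" and n: "n > 0"
  shows "\<bar>blinfun_apply \<phi> (f (real n *\<^sub>R x) - f (real n *\<^sub>R y)) / real n\<bar> \<le> norm \<phi> * norm (x - y) + norm \<phi> * \<epsilon> / real n"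
proof -
  have "norm (f (real n *\<^sub>R x) - f (real n *\<^sub>R y)) \<le> norm (real n *\<^sub>R x - real n *\<^sub>R y) + \<epsilon>" by (rule fdist[OF f])
  also have "norm (real n *\<^sub>R x - real n *\<^sub>R y) = real n * norm (x - y)"
    by (metis abs_of_nat norm_scaleR scaleR_diff_right)
  finally have h: "norm (f (real n *\<^sub>R x) - f (real n *\<^sub>R y)) \<le> real n * norm (x - y) + \<epsilon>" .
  have "\<bar>blinfun_apply \<phi> (f (real n *\<^sub>R x) - f (real n *\<^sub>R y))\<bar> \<le> norm \<phi> * norm (f (real n *\<^sub>R x) - f (real n *\<^sub>R y))"
    using norm_blinfun[of \<phi>] by simp
  also have "\<dots> \<le> norm \<phi> * (real n * norm (x - y) + \<epsilon>)" using h by (intro mult_left_mono) auto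
  finally have "\<bar>blinfun_apply \<phi> (f (real n *\<^sub>R x) - f (real n *\<^sub>R y))\<bar> / real n \<le> norm \<phi> * (real n * norm (x - y) + \<epsilon>) / real n"
    by (intro divide_right_mono) auto
  also have "\<dots> = norm \<phi> * norm (x - y) + norm \<phi> * \<epsilon> / real n" using n by (simp add: field_simps)
  finally show ?thesis by simp
qed

lemma dseq_bnd:
  fixes f :: "'a::real_normed_vector \<Rightarrow> 'b::real_normed_vector" and \<phi> :: "'b \<Rightarrow>\<^sub>L real"
  assumes f: "eps_isometry \<epsilon> f" and e: "\<epsilon> > 0"
  shows "bnd (\<lambda>n. blinfun_apply \<phi> (f (real n *\<^sub>R x) - f (real n *\<^sub>R y)) / real n)"
proof (rule bnd_intro)
  fix n :: nat
  show "\<bar>blinfun_apply \<phi> (f (real n *\<^sub>R x) - f (real n *\<^sub>R y)) / real n\<bar> \<le> norm \<phi> * norm (x - y) + norm \<phi> * \<epsilon>"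
  proof (cases "n = 0")
    case True then show ?thesis using e by simp
  next
    case False
    then have n1: "real n \<ge> 1" by simp
    have "norm \<phi> * \<epsilon> * 1 \<le> norm \<phi> * \<epsilon> * real n"
      using n1 e by (intro mult_left_mono) auto
    then have "norm \<phi> * \<epsilon> / real n \<le> norm \<phi> * \<epsilon>" using n1
      by (simp add: divide_le_eq)
    then show ?thesis using dseq_bound[OF f e, of n \<phi> x y] False by simp
  qed
qed

lemma smooth_lower:
  fixes f :: "'a::real_normed_vector \<Rightarrow> 'b::real_normed_vector"
  assumes BL: "is_blim BL" and f: "eps_isometry \<epsilon> f" and e: "\<epsilon> > 0"
    and sm: "Dp (x - y) y + Dp (x - y) (- y) \<le> 0"
  shows "\<exists>\<Phi>::'b \<Rightarrow>\<^sub>L real. norm \<Phi> \<le> 1 \<and>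
     norm (x - y) \<le> BL (\<lambda>n. blinfun_apply \<Phi> (f (real n *\<^sub>R x) - f (real n *\<^sub>R y)) / real n)"
proof -
  define u where "u = x - y"
  define P1 where "P1 N = f (real N *\<^sub>R u)" for N
  define P2 where "P2 N = f (- (real N *\<^sub>R u))" for N
  define cc where "cc N = real N * norm u" for N
  have P1b: "\<bar>norm (P1 N - f 0) - cc N\<bar> \<le> \<epsilon>" for N
    using fdist[OF f, of "real N *\<^sub>R u" 0] unfolding P1_def cc_def by (simp add: abs_le_iff)
  have P2b: "\<bar>norm (P2 N - f 0) - cc N\<bar> \<le> \<epsilon>" for N
    using fdist[OF f, of "- (real N *\<^sub>R u)" 0] unfolding P2_def cc_def by (simp add: abs_le_iff)
  define k where "k q = BL (\<lambda>N. norm (q - P1 N) - cc N)" for q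
  define m where "m q = BL (\<lambda>N. norm (q - P2 N) - cc N) + \<epsilon>" for q
  have b1: "bnd (\<lambda>N. norm (q - P1 N) - cc N)" for q by (rule bnd_hs[OF P1b])
  have b2: "bnd (\<lambda>N. norm (q - P2 N) - cc N)" for q by (rule bnd_hs[OF P2b])
  have kc: "k (a *\<^sub>R q + (1-a) *\<^sub>R r) \<le> a * k q + (1-a) * k r" if "0 \<le> a" "a \<le> 1" for q r a
  proof -
    have "k (a *\<^sub>R q + (1-a) *\<^sub>R r) \<le> BL (\<lambda>N. a * (norm (q - P1 N) - cc N) + (1 - a) * (norm (r - P1 N) - cc N))"
      unfolding k_def using that by (intro bl_mono[OF BL] b1 bnd_add bnd_scale hs_conv)
    also have "\<dots> = a * k q + (1-a) * k r" unfolding k_def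
      by (simp add: bl_add[OF BL] bl_scale[OF BL] bnd_scale b1)
    finally show ?thesis .
  qed
  have mc: "m (a *\<^sub>R q + (1-a) *\<^sub>R r) \<le> a * m q + (1-a) * m r" if "0 \<le> a" "a \<le> 1" for q r a
  proof -
    have "m (a *\<^sub>R q + (1-a) *\<^sub>R r) \<le> BL (\<lambda>N. a * (norm (q - P2 N) - cc N) + (1 - a) * (norm (r - P2 N) - cc N)) + \<epsilon>"
      unfolding m_def using that by (simp, intro bl_mono[OF BL] b2 bnd_add bnd_scale hs_conv)
    also have "\<dots> = a * m q + (1-a) * m r"
    proof -
      have e: "BL (\<lambda>N. a * (norm (q - P2 N) - cc N) + (1 - a) * (norm (r - P2 N) - cc N))
          = a * BL (\<lambda>N. norm (q - P2 N) - cc N) + (1 - a) * BL (\<lambda>N. norm (r - P2 N) - cc N)"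
        by (simp add: bl_add[OF BL] bl_scale[OF BL] bnd_scale b2)
      show ?thesis unfolding m_def e by (simp add: algebra_simps)
    qed
    finally show ?thesis .
  qed
  have kl: "k q \<le> k r + norm (q - r)" for q r
  proof -
    have "k q \<le> BL (\<lambda>N. (norm (r - P1 N) - cc N) + norm (q - r))" unfolding k_def
    proof (intro bl_mono[OF BL] b1 bnd_add bnd_const)
      fix N show "norm (q - P1 N) - cc N \<le> norm (r - P1 N) - cc N + norm (q - r)"
        using tri[of q "P1 N" r] by (simp add: norm_minus_commute)
    qed
    also have "\<dots> = k r + norm (q - r)" unfolding k_def by (rule bl_add_const[OF BL b1])
    finally show ?thesis .
  qed
  have pos: "0 \<le> k q + m q" for q
  proof -
    have "- \<epsilon> \<le> BL (\<lambda>N. (norm (q - P1 N) - cc N) + (norm (q - P2 N) - cc N))"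
    proof (rule bl_ge[OF BL, of _ 0])
      show "bnd (\<lambda>N. (norm (q - P1 N) - cc N) + (norm (q - P2 N) - cc N))" by (intro bnd_add b1 b2)
      fix N :: nat
      have "norm (P1 N - P2 N) \<le> norm (P1 N - q) + norm (q - P2 N)" by (rule tri)
      moreover have "norm (real N *\<^sub>R u - - (real N *\<^sub>R u)) - \<epsilon> \<le> norm (P1 N - P2 N)"
        unfolding P1_def P2_def by (rule fdist[OF f])
      moreover have "norm (real N *\<^sub>R u - - (real N *\<^sub>R u)) = 2 * cc N"
      proof -
        have "real N *\<^sub>R u - - (real N *\<^sub>R u) = (2 * real N) *\<^sub>R u" by (simp add: scaleR_left_distrib[symmetric])
        then show ?thesis unfolding cc_def by simp
      qed
      ultimately show "- \<epsilon> \<le> (norm (q - P1 N) - cc N) + (norm (q - P2 N) - cc N)"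
        by (simp add: norm_minus_commute)
    qed
    then show ?thesis unfolding k_def m_def using bl_add[OF BL b1 b2] by simp
  qed
  obtain \<phi> c where \<phi>: "linear \<phi>" "\<And>y. \<phi> y \<le> norm y" "\<And>q. \<phi> q + c \<le> k q" "\<And>q. - m q \<le> \<phi> q + c"
    using sandwich[of k m, OF kc mc kl pos] by blast
  have blin: "bounded_linear (\<lambda>v. - \<phi> v)"
  proof (rule bounded_linear_intro[where K = 1])
    fix v w :: 'b and r :: real
    show "- \<phi> (v + w) = - \<phi> v + - \<phi> w" using linear_add[OF \<phi>(1)] by simp
    show "- \<phi> (r *\<^sub>R v) = r *\<^sub>R - \<phi> v" using linear_scale[OF \<phi>(1)] by simp
    have "\<phi> (- v) \<le> norm v" using \<phi>(2)[of "- v"] by simp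
    then show "norm (- \<phi> v) \<le> norm v * 1" using \<phi>(2)[of v] linear_neg[OF \<phi>(1), of v] by simp
  qed
  define \<Phi> where "\<Phi> = Blinfun (\<lambda>v. - \<phi> v)"
  have \<Phi>a: "blinfun_apply \<Phi> v = - \<phi> v" for v unfolding \<Phi>_def bounded_linear_Blinfun_apply[OF blin] ..
  have n\<Phi>: "norm \<Phi> \<le> 1"
  proof (rule norm_blinfun_bound)
    fix v
    have "\<phi> (- v) \<le> norm v" using \<phi>(2)[of "- v"] by simp
    then show "norm (blinfun_apply \<Phi> v) \<le> 1 * norm v" using \<Phi>a \<phi>(2)[of v] linear_neg[OF \<phi>(1), of v] by simp
  qed simp
  have claim: "real n * norm u - 3 * \<epsilon> \<le> \<phi> (f (real n *\<^sub>R y)) - \<phi> (f (real n *\<^sub>R x))" if n: "n > 0" for n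
  proof -
    have rn: "real n > 0" using n by simp
    have A: "BL (\<lambda>N. norm (f (real n *\<^sub>R y) - P2 N) - cc N) \<le> real n * Dp u y + \<epsilon>"
    proof (rule bl_le_approx[OF BL b2])
      fix \<delta> :: real assume d: "\<delta> > 0"
      obtain N0 where N0: "\<And>N. N \<ge> N0 \<Longrightarrow> norm (real n *\<^sub>R y + real N *\<^sub>R u) - real N * norm u \<le> real n * Dp u y + \<delta>"
        using Dp_ev[OF rn d, of y u] by blast
      have "norm (f (real n *\<^sub>R y) - P2 N) - cc N \<le> real n * Dp u y + \<epsilon> + \<delta>" if "N \<ge> N0" for N
      proof -
        have "norm (f (real n *\<^sub>R y) - P2 N) \<le> norm (real n *\<^sub>R y - - (real N *\<^sub>R u)) + \<epsilon>"
          unfolding P2_def by (rule fdist[OF f])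
        then show ?thesis using N0[OF that] unfolding cc_def by simp
      qed
      then show "\<exists>N. \<forall>N'\<ge>N. norm (f (real n *\<^sub>R y) - P2 N') - cc N' \<le> real n * Dp u y + \<epsilon> + \<delta>" by blast
    qed
    have B: "BL (\<lambda>N. norm (f (real n *\<^sub>R x) - P1 N) - cc N) \<le> real n * Dp u (- y) - real n * norm u + \<epsilon>"
    proof (rule bl_le_approx[OF BL b1])
      fix \<delta> :: real assume d: "\<delta> > 0"
      obtain N0 where N0: "\<And>N. N \<ge> N0 \<Longrightarrow> norm (real n *\<^sub>R (- y) + real N *\<^sub>R u) - real N * norm u \<le> real n * Dp u (- y) + \<delta>"
        using Dp_ev[OF rn d, of "- y" u] by blast
      have "norm (f (real n *\<^sub>R x) - P1 N) - cc N \<le> real n * Dp u (- y) - real n * norm u + \<epsilon> + \<delta>" if "N \<ge> N0 + n" for N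
      proof -
        define N' where "N' = N - n"
        have NN: "real N = real N' + real n" "N' \<ge> N0" unfolding N'_def using that by auto
        have "norm (f (real n *\<^sub>R x) - P1 N) \<le> norm (real n *\<^sub>R x - real N *\<^sub>R u) + \<epsilon>"
          unfolding P1_def by (rule fdist[OF f])
        also have "real n *\<^sub>R x - real N *\<^sub>R u = - (real n *\<^sub>R (- y) + real N' *\<^sub>R u)"
          unfolding NN(1) u_def by (simp add: algebra_simps)
        finally have "norm (f (real n *\<^sub>R x) - P1 N) \<le> norm (real n *\<^sub>R (- y) + real N' *\<^sub>R u) + \<epsilon>"
          by (simp only: norm_minus_cancel)
        then show ?thesis using N0[OF NN(2)] unfolding cc_def NN(1) by (simp add: algebra_simps)
      qed
      then show "\<exists>N. \<forall>N'\<ge>N. norm (f (real n *\<^sub>R x) - P1 N') - cc N' \<le> real n * Dp u (- y) - real n * norm u + \<epsilon> + \<delta>" by blast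
    qed
    have "- m (f (real n *\<^sub>R y)) \<le> \<phi> (f (real n *\<^sub>R y)) + c" by (rule \<phi>(4))
    moreover have "\<phi> (f (real n *\<^sub>R x)) + c \<le> k (f (real n *\<^sub>R x))" by (rule \<phi>(3))
    moreover have "real n * (Dp u y + Dp u (- y)) \<le> 0"
      using sm unfolding u_def[symmetric] by (intro mult_nonneg_nonpos) auto
    ultimately show ?thesis using A B unfolding k_def m_def by (simp add: algebra_simps)
  qed
  have "norm u \<le> BL (\<lambda>n. blinfun_apply \<Phi> (f (real n *\<^sub>R x) - f (real n *\<^sub>R y)) / real n)"
  proof (rule bl_ge_approx[OF BL dseq_bnd[OF f e]])
    fix \<delta> :: real assume d: "\<delta> > 0"
    obtain N where N: "\<And>n. n \<ge> N \<Longrightarrow> 3 * \<epsilon> / real n \<le> \<delta>" using inv_small[OF d] by blast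
    have "norm u - \<delta> \<le> blinfun_apply \<Phi> (f (real n *\<^sub>R x) - f (real n *\<^sub>R y)) / real n" if "n \<ge> Suc N" for n
    proof -
      have n: "n > 0" "n \<ge> N" using that by auto
      have "blinfun_apply \<Phi> (f (real n *\<^sub>R x) - f (real n *\<^sub>R y)) = \<phi> (f (real n *\<^sub>R y)) - \<phi> (f (real n *\<^sub>R x))"
        unfolding \<Phi>a using linear_diff[OF \<phi>(1)] by simp
      moreover have "norm u - 3 * \<epsilon> / real n \<le> (\<phi> (f (real n *\<^sub>R y)) - \<phi> (f (real n *\<^sub>R x))) / real n"
      proof -
        have "norm u - 3 * \<epsilon> / real n = (real n * norm u - 3 * \<epsilon>) / real n" using n(1) by (simp add: field_simps)
        also have "\<dots> \<le> (\<phi> (f (real n *\<^sub>R y)) - \<phi> (f (real n *\<^sub>R x))) / real n"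
          using claim[OF n(1)] by (intro divide_right_mono) auto
        finally show ?thesis .
      qed
      ultimately show ?thesis using N[OF n(2)] by simp
    qed
    then show "\<exists>N. \<forall>n\<ge>N. norm u - \<delta> \<le> blinfun_apply \<Phi> (f (real n *\<^sub>R x) - f (real n *\<^sub>R y)) / real n" by blast
  qed
  then show ?thesis using n\<Phi> unfolding u_def by blast
qed


theorem theorem3p3:
  fixes f :: "'a::banach \<Rightarrow> 'b::banach" and \<epsilon> :: real
  assumes "separable_space (euclidean :: 'a topology)"
    and "\<not> (\<exists>S :: 'b set. subspace S \<and> closed S \<and> isomorphic_to_ell1 S)"
    and "\<epsilon> > 0"
    and "eps_isometry \<epsilon> f"
  shows "\<exists>U :: 'a \<Rightarrow> (('b \<Rightarrow>\<^sub>L real) \<Rightarrow>\<^sub>L real).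
           \<forall>x y. norm (U x - U y) = norm (x - y)"
proof -
  note e = assms(3) and f = assms(4)
  obtain BL where BL: "is_blim BL" using is_blim_exists by blast
  define sq where "sq x \<phi> n = blinfun_apply \<phi> (f (real n *\<^sub>R x) - f 0) / real n"
    for x and \<phi> :: "'b \<Rightarrow>\<^sub>L real" and n :: nat
  have sq_eq: "sq x \<phi> = (\<lambda>n. blinfun_apply \<phi> (f (real n *\<^sub>R x) - f (real n *\<^sub>R 0)) / real n)" for x \<phi>
    unfolding sq_def by simp
  have sq_bnd: "bnd (sq x \<phi>)" for x \<phi> unfolding sq_eq by (rule dseq_bnd[OF f e])
  have sq_abs: "\<bar>sq x \<phi> n\<bar> \<le> norm \<phi> * norm x + norm \<phi> * \<epsilon>" for x \<phi> n
  proof (cases "n = 0")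
    case True then show ?thesis unfolding sq_def using e by simp
  next
    case False
    then have n1: "real n \<ge> 1" by simp
    have "norm \<phi> * \<epsilon> * 1 \<le> norm \<phi> * \<epsilon> * real n"
      using n1 e by (intro mult_left_mono) auto
    then have "norm \<phi> * \<epsilon> / real n \<le> norm \<phi> * \<epsilon>" using n1
      by (simp add: divide_le_eq)
    then show ?thesis using dseq_bound[OF f e, of n \<phi> x 0] False unfolding sq_def by simp
  qed
  define Uf where "Uf x \<phi> = BL (sq x \<phi>)" for x \<phi>
  have Ublin: "bounded_linear (Uf x)" for x
  proof (rule bounded_linear_intro[where K = "norm x + \<epsilon>"])
    fix \<phi> \<psi> :: "'b \<Rightarrow>\<^sub>L real" and r :: real
    have "sq x (\<phi> + \<psi>) = (\<lambda>n. sq x \<phi> n + sq x \<psi> n)"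
      unfolding sq_def by (simp add: plus_blinfun.rep_eq add_divide_distrib)
    then show "Uf x (\<phi> + \<psi>) = Uf x \<phi> + Uf x \<psi>" unfolding Uf_def using bl_add[OF BL sq_bnd sq_bnd] by simp
    have "sq x (r *\<^sub>R \<phi>) = (\<lambda>n. r * sq x \<phi> n)"
      unfolding sq_def by (simp add: scaleR_blinfun.rep_eq)
    then show "Uf x (r *\<^sub>R \<phi>) = r *\<^sub>R Uf x \<phi>" unfolding Uf_def using bl_scale[OF BL sq_bnd] by simp
    have "Uf x \<phi> \<le> norm \<phi> * norm x + norm \<phi> * \<epsilon>" unfolding Uf_def
      by (rule bl_le[OF BL sq_bnd, of 0]) (use sq_abs in \<open>auto simp: abs_le_iff\<close>)
    moreover have "- (norm \<phi> * norm x + norm \<phi> * \<epsilon>) \<le> Uf x \<phi>" unfolding Uf_def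
    proof (rule bl_ge[OF BL sq_bnd, of 0])
      fix n :: nat
      show "- (norm \<phi> * norm x + norm \<phi> * \<epsilon>) \<le> sq x \<phi> n" using sq_abs[of x \<phi> n] by linarith
    qed
    ultimately show "norm (Uf x \<phi>) \<le> norm \<phi> * (norm x + \<epsilon>)" by (simp add: abs_le_iff algebra_simps)
  qed
  define U where "U x = Blinfun (Uf x)" for x
  have Ua: "blinfun_apply (U x) = Uf x" for x unfolding U_def by (rule bounded_linear_Blinfun_apply[OF Ublin])
  have Udiff: "blinfun_apply (U x - U y) \<phi> = BL (\<lambda>n. blinfun_apply \<phi> (f (real n *\<^sub>R x) - f (real n *\<^sub>R y)) / real n)"
    for x y \<phi>
  proof -
    have "blinfun_apply (U x - U y) \<phi> = BL (\<lambda>n. sq x \<phi> n - sq y \<phi> n)"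
      unfolding minus_blinfun.rep_eq Ua Uf_def using bl_diff[OF BL sq_bnd sq_bnd] by simp
    also have "(\<lambda>n. sq x \<phi> n - sq y \<phi> n) = (\<lambda>n. blinfun_apply \<phi> (f (real n *\<^sub>R x) - f (real n *\<^sub>R y)) / real n)"
      unfolding sq_def by (simp add: blinfun.diff_right diff_divide_distrib)
    finally show ?thesis .
  qed
  have upper: "norm (U x - U y) \<le> norm (x - y)" for x y
  proof (rule norm_blinfun_bound)
    fix \<phi> :: "'b \<Rightarrow>\<^sub>L real"
    define ds where "ds n = blinfun_apply \<phi> (f (real n *\<^sub>R x) - f (real n *\<^sub>R y)) / real n" for n
    have dsb: "bnd ds" unfolding ds_def by (rule dseq_bnd[OF f e])
    have ev: "\<exists>N. \<forall>n\<ge>N. \<bar>ds n\<bar> \<le> norm \<phi> * norm (x - y) + \<delta>" if d: "\<delta> > 0" for \<delta>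
    proof -
      obtain N where N: "\<And>n. n \<ge> N \<Longrightarrow> norm \<phi> * \<epsilon> / real n \<le> \<delta>" using inv_small[OF d] by blast
      have "\<bar>ds n\<bar> \<le> norm \<phi> * norm (x - y) + \<delta>" if "n \<ge> Suc N" for n
        using dseq_bound[OF f e, of n \<phi> x y] N[of n] that unfolding ds_def by simp
      then show ?thesis by blast
    qed
    have "BL ds \<le> norm \<phi> * norm (x - y)"
    proof (rule bl_le_approx[OF BL dsb])
      fix \<delta> :: real assume "\<delta> > 0"
      then obtain N where "\<forall>n\<ge>N. \<bar>ds n\<bar> \<le> norm \<phi> * norm (x - y) + \<delta>" using ev by blast
      then show "\<exists>N. \<forall>n\<ge>N. ds n \<le> norm \<phi> * norm (x - y) + \<delta>" by (auto simp: abs_le_iff)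
    qed
    moreover have "- (norm \<phi> * norm (x - y)) \<le> BL ds"
    proof (rule bl_ge_approx[OF BL dsb])
      fix \<delta> :: real assume "\<delta> > 0"
      then obtain N where "\<forall>n\<ge>N. \<bar>ds n\<bar> \<le> norm \<phi> * norm (x - y) + \<delta>" using ev by blast
      then have "\<forall>n\<ge>N. - (norm \<phi> * norm (x - y)) - \<delta> \<le> ds n" by (auto simp: abs_le_iff)
      then show "\<exists>N. \<forall>n\<ge>N. - (norm \<phi> * norm (x - y)) - \<delta> \<le> ds n" by blast
    qed
    ultimately show "norm (blinfun_apply (U x - U y) \<phi>) \<le> norm (x - y) * norm \<phi>"
      unfolding Udiff ds_def[symmetric] by (simp add: abs_le_iff algebra_simps)
  qed simp
  have slow: "norm (x - y) \<le> norm (U x - U y)" if sm: "Dp (x - y) y + Dp (x - y) (- y) \<le> 0" for x y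
  proof -
    obtain \<Phi> :: "'b \<Rightarrow>\<^sub>L real" where \<Phi>: "norm \<Phi> \<le> 1"
      "norm (x - y) \<le> BL (\<lambda>n. blinfun_apply \<Phi> (f (real n *\<^sub>R x) - f (real n *\<^sub>R y)) / real n)"
      using smooth_lower[OF BL f e sm] by blast
    have "norm (x - y) \<le> blinfun_apply (U x - U y) \<Phi>" using \<Phi>(2) unfolding Udiff .
    also have "\<dots> \<le> norm (blinfun_apply (U x - U y) \<Phi>)" by simp
    also have "\<dots> \<le> norm (U x - U y) * norm \<Phi>" by (rule norm_blinfun)
    also have "\<dots> \<le> norm (U x - U y) * 1" using \<Phi>(1) by (intro mult_left_mono) auto
    finally show ?thesis by simp
  qed
  have lower: "norm (x - y) \<le> norm (U x - U y)" for x y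
  proof (rule field_le_epsilon)
    fix d :: real assume d: "d > 0"
    define \<delta> where "\<delta> = d / (2 * (norm y + 1))"
    have h2: "0 < 2 * (norm y + 1)" by (smt (verit) norm_ge_zero)
    have h1: "norm y + 1 \<noteq> 0" by (smt (verit) norm_ge_zero)
    have dpos: "\<delta> > 0" unfolding \<delta>_def using d h2 by (intro divide_pos_pos)
    obtain s where s: "\<bar>s\<bar> < \<delta>" "Dp ((x - y) + s *\<^sub>R y) y + Dp ((x - y) + s *\<^sub>R y) (- y) \<le> 0"
      using Dp_density[OF dpos, of "x - y" y] by blast
    define x' where "x' = x + s *\<^sub>R y"
    have xe: "x' - y = (x - y) + s *\<^sub>R y" unfolding x'_def by (simp add: algebra_simps)
    have "Dp (x' - y) y + Dp (x' - y) (- y) \<le> 0" unfolding xe by (rule s(2))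
    then have l1: "norm (x' - y) \<le> norm (U x' - U y)" by (rule slow)
    have l2: "norm (U x' - U x) \<le> norm (x' - x)" by (rule upper)
    have xx: "norm (x' - x) = \<bar>s\<bar> * norm y" unfolding x'_def by simp
    have "\<bar>s\<bar> * norm y \<le> \<delta> * (norm y + 1)" using s(1) by (intro mult_mono) auto
    also have "\<delta> * (norm y + 1) = d / 2" unfolding \<delta>_def using h1 by (simp add: field_simps)
    finally have sm: "norm (x' - x) \<le> d / 2" using xx by simp
    have "norm (x - y) \<le> norm (x' - y) + norm (x' - x)"
      using tri[of x y x'] by (simp add: norm_minus_commute add.commute)
    also have "\<dots> \<le> norm (U x' - U y) + norm (x' - x)" using l1 by simp
    also have "norm (U x' - U y) \<le> norm (U x - U y) + norm (U x' - U x)"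
      using tri[of "U x'" "U y" "U x"] by (simp add: norm_minus_commute add.commute)
    finally show "norm (x - y) \<le> norm (U x - U y) + d" using l2 sm by simp
  qed
  show ?thesis using upper lower by (intro exI[of _ U]) (auto intro: antisym)
qed

end
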